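(* Every irreducible SDAN contains only one atom.
   Context: Fix a finite nonempty set $A$ of agents; each $a\in A$ has a nonempty set $Q_a$ of internal states, $Q_A=\prod_{a\in A}Q_a$. A transformer is a left-total relation on $Q_A$; for $S\subseteq A$ an $S$-transformer is one with $(q,q')\in\tau\Rightarrow q_a=q'_a$ for all $a\notin S$. An atom is $n=(P_n,R_n,\delta_n)$: $P_n\subseteq A$ nonempty (parties), $R_n$ finite nonempty (outcomes), $\delta_n$ assigns to each $r\in R_n$ a $P_n$-transformer $\langle n,r\rangle$. A negotiation is $\mathcal N=(N,n_0,n_f,\mathcal X)$ with $N$ a finite set of atoms, $n_0,n_f\in N$ (possibly equal), $T(N)=\{(n,a,r): n\in N,a\in P_n,r\in R_n\}$, $\mathcal X:T(N)\to 2^N$, such that every agent is a party of $n_0$ and of $n_f$, and $\mathcal X(n,a,r)=\emptyset$ iff $n=n_f$. Its graph has vertices $N$ and edges $(n,n')$ whenever $n'\in\mathcal X(n,a,r)$ for some $(n,a,r)$; $\mathcal N$ is acyclic if the graph has no cycle. A marking is $x:A\to 2^N$; initial $x_0(a)=\{n_0\}$, final $x_f(a)=\emptyset$. $x$ enables $n$ if $n\in x(a)$ for all $a\in P_n$; then for $r\in R_n$ the step $(n,r)$ leads to $x'$ with $x'(a)=\mathcal X(n,a,r)$ for $a\in P_n$, $x'(a)=x(a)$ otherwise. A large step is a finite occurrence sequence from $x_0$ to $x_f$. $\mathcal N$ is sound if every atom is enabled at some reachable marking and every occurrence sequence from $x_0$ is a large step or can be extended to one. An agent $a$ is deterministic if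 for each $(n,a,r)\in T(N)$ with $n\ne n_f$, $\mathcal X(n,a,r)$ is a singleton; $\mathcal N$ is deterministic if all agents are deterministic. An SDAN is a sound, deterministic, acyclic negotiation. Merge rule. Guard: some atom $n$ has distinct outcomes $r_1,r_2$ with $\mathcal X(n,a,r_1)=\mathcal X(n,a,r_2)$ for all $a\in P_n$. Action: replace $r_1,r_2$ in $R_n$ by a fresh outcome $r_f$ with $\mathcal X(n,a,r_f)=\mathcal X(n,a,r_1)$ for $a\in P_n$ and $\langle n,r_f\rangle=\langle n,r_1\rangle\cup\langle n,r_2\rangle$. $(n,r)$ unconditionally enables $n'$ if $P_n\supseteq P_{n'}$ and $\mathcal X(n,a,r)=\{n'\}$ for all $a\in P_{n'}$. d-shortcut rule. Guard: atoms $n\neq n'$ and $r\in R_n$ such that $(n,r)$ unconditionally enables $n'$; $n'$ has at most one outcome; and if $n'\in\mathcal X(\tilde n,\tilde a,\tilde r)$ for at least one $(\tilde n,\tilde a,\tilde r)\in T(N)$ with $\tilde n\neq n$, then $\{n'\}=\mathcal X(\tilde n,\tilde a,\tilde r)$ for some $(\tilde n,\tilde a,\tilde r)\in T(N)$ with $\tilde n\ne n$. Action: (1) replace $R_n$ by $(R_n\setminus\{r\})\cup\{r'_f:r'\in R_{n'}\}$ with fresh names; (2) for $a\in P_{n'}$ set $\mathcal X(n,a,r'_f)=\mathcal X(n',a,r')$, for $a\in P_n\setminus P_{n'}$ set $\mathcal X(n,a,r'_f)=\mathcal X(n,a,r)$; (3) $\langle n,r'_f\rangle=\langle n,r\rangle\langle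 n',r'\rangle$ (relational composition); (4) if afterwards $n'\notin\mathcal X(\tilde n,\tilde a,\tilde r)$ for all $(\tilde n,\tilde a,\tilde r)\in T(N)$, remove $n'$. An SDAN is irreducible if neither the merge rule nor the d-shortcut rule can be applied to it. *)

theory Defs
  imports "HOL-Library.FuncSet"
begin

record ('a, 'q, 'n, 'r) negotiation =
  atoms :: "'n set"
  init_atom :: 'n
  final_atom :: 'n
  parties :: "'n \<Rightarrow> 'a set"
  outcomes :: "'n \<Rightarrow> 'r set"
  trans_of :: "'n \<Rightarrow> 'r \<Rightarrow> (('a \<Rightarrow> 'q) \<times> ('a \<Rightarrow> 'q)) set"
  next_of :: "'n \<Rightarrow> 'a \<Rightarrow> 'r \<Rightarrow> 'n set"

definition global_states :: "'a set \<Rightarrow> ('a \<Rightarrow> 'q set) \<Rightarrow> ('a \<Rightarrow> 'q) set" where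
  "global_states A Q = Pi\<^sub>E A Q"

definition transformer :: "'a set \<Rightarrow> ('a \<Rightarrow> 'q set) \<Rightarrow> (('a \<Rightarrow> 'q) \<times> ('a \<Rightarrow> 'q)) set \<Rightarrow> bool" where
  "transformer A Q \<tau> \<longleftrightarrow> \<tau> \<subseteq> global_states A Q \<times> global_states A Q
     \<and> (\<forall>q\<in>global_states A Q. \<exists>q'. (q, q') \<in> \<tau>)"

definition S_transformer :: "'a set \<Rightarrow> ('a \<Rightarrow> 'q set) \<Rightarrow> 'a set \<Rightarrow> (('a \<Rightarrow> 'q) \<times> ('a \<Rightarrow> 'q)) set \<Rightarrow> bool" where
  "S_transformer A Q S \<tau> \<longleftrightarrow> transformer A Q \<tau>
     \<and> (\<forall>(q, q')\<in>\<tau>. \<forall>a\<in>A - S. q a = q' a)"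

definition Tset :: "('a, 'q, 'n, 'r) negotiation \<Rightarrow> ('n \<times> 'a \<times> 'r) set" where
  "Tset \<N> = {(n, a, r). n \<in> atoms \<N> \<and> a \<in> parties \<N> n \<and> r \<in> outcomes \<N> n}"

definition is_negotiation :: "'a set \<Rightarrow> ('a \<Rightarrow> 'q set) \<Rightarrow> ('a, 'q, 'n, 'r) negotiation \<Rightarrow> bool" where
  "is_negotiation A Q \<N> \<longleftrightarrow>
     finite A \<and> A \<noteq> {} \<and> (\<forall>a\<in>A. Q a \<noteq> {})
   \<and> finite (atoms \<N>) \<and> init_atom \<N> \<in> atoms \<N> \<and> final_atom \<N> \<in> atoms \<N>
   \<and> (\<forall>n\<in>atoms \<N>.
        parties \<N> n \<noteq> {} \<and> parties \<N> n \<subseteq> A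
      \<and> finite (outcomes \<N> n) \<and> outcomes \<N> n \<noteq> {}
      \<and> (\<forall>r\<in>outcomes \<N> n. S_transformer A Q (parties \<N> n) (trans_of \<N> n r)))
   \<and> A \<subseteq> parties \<N> (init_atom \<N>) \<and> A \<subseteq> parties \<N> (final_atom \<N>)
   \<and> (\<forall>(n, a, r)\<in>Tset \<N>. next_of \<N> n a r \<subseteq> atoms \<N>
        \<and> (next_of \<N> n a r = {} \<longleftrightarrow> n = final_atom \<N>))"

definition graph_edges :: "('a, 'q, 'n, 'r) negotiation \<Rightarrow> ('n \<times> 'n) set" where
  "graph_edges \<N> = {(n, n'). \<exists>a r. (n, a, r) \<in> Tset \<N> \<and> n' \<in> next_of \<N> n a r}"

definition acyclic_neg :: "('a, 'q, 'n, 'r) negotiation \<Rightarrow> bool" where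
  "acyclic_neg \<N> \<longleftrightarrow> acyclic (graph_edges \<N>)"

text \<open>Markings. Agents outside A carry the empty set throughout.\<close>
definition init_marking :: "'a set \<Rightarrow> ('a, 'q, 'n, 'r) negotiation \<Rightarrow> 'a \<Rightarrow> 'n set" where
  "init_marking A \<N> = (\<lambda>a. if a \<in> A then {init_atom \<N>} else {})"

definition final_marking :: "'a \<Rightarrow> 'n set" where
  "final_marking = (\<lambda>a. {})"

definition enables :: "('a, 'q, 'n, 'r) negotiation \<Rightarrow> ('a \<Rightarrow> 'n set) \<Rightarrow> 'n \<Rightarrow> bool" where
  "enables \<N> x n \<longleftrightarrow> (\<forall>a\<in>parties \<N> n. n \<in> x a)"

definition step :: "('a, 'q, 'n, 'r) negotiation \<Rightarrow> ('a \<Rightarrow> 'n set) \<Rightarrow> 'n \<times> 'r \<Rightarrow> ('a \<Rightarrow> 'n set) \<Rightarrow> bool" where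
  "step \<N> x nr x' \<longleftrightarrow> (case nr of (n, r) \<Rightarrow>
     n \<in> atoms \<N> \<and> r \<in> outcomes \<N> n \<and> enables \<N> x n
     \<and> x' = (\<lambda>a. if a \<in> parties \<N> n then next_of \<N> n a r else x a))"

fun run :: "('a, 'q, 'n, 'r) negotiation \<Rightarrow> ('a \<Rightarrow> 'n set) \<Rightarrow> ('n \<times> 'r) list \<Rightarrow> ('a \<Rightarrow> 'n set) \<Rightarrow> bool" where
  "run \<N> x [] x' \<longleftrightarrow> x' = x"
| "run \<N> x (s # \<sigma>) x' \<longleftrightarrow> (\<exists>y. step \<N> x s y \<and> run \<N> y \<sigma> x')"

definition reachable :: "'a set \<Rightarrow> ('a, 'q, 'n, 'r) negotiation \<Rightarrow> ('a \<Rightarrow> 'n set) \<Rightarrow> bool" where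
  "reachable A \<N> x \<longleftrightarrow> (\<exists>\<sigma>. run \<N> (init_marking A \<N>) \<sigma> x)"

definition large_step :: "'a set \<Rightarrow> ('a, 'q, 'n, 'r) negotiation \<Rightarrow> ('n \<times> 'r) list \<Rightarrow> bool" where
  "large_step A \<N> \<sigma> \<longleftrightarrow> run \<N> (init_marking A \<N>) \<sigma> final_marking"

definition sound :: "'a set \<Rightarrow> ('a, 'q, 'n, 'r) negotiation \<Rightarrow> bool" where
  "sound A \<N> \<longleftrightarrow>
     (\<forall>n\<in>atoms \<N>. \<exists>x. reachable A \<N> x \<and> enables \<N> x n)
   \<and> (\<forall>\<sigma> x. run \<N> (init_marking A \<N>) \<sigma> x \<longrightarrow>
        large_step A \<N> \<sigma> \<or> (\<exists>\<sigma>'. large_step A \<N> (\<sigma> @ \<sigma>')))"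

definition deterministic_agent :: "('a, 'q, 'n, 'r) negotiation \<Rightarrow> 'a \<Rightarrow> bool" where
  "deterministic_agent \<N> a \<longleftrightarrow>
     (\<forall>n r. (n, a, r) \<in> Tset \<N> \<and> n \<noteq> final_atom \<N> \<longrightarrow> (\<exists>n'. next_of \<N> n a r = {n'}))"

definition deterministic :: "'a set \<Rightarrow> ('a, 'q, 'n, 'r) negotiation \<Rightarrow> bool" where
  "deterministic A \<N> \<longleftrightarrow> (\<forall>a\<in>A. deterministic_agent \<N> a)"

definition SDAN :: "'a set \<Rightarrow> ('a \<Rightarrow> 'q set) \<Rightarrow> ('a, 'q, 'n, 'r) negotiation \<Rightarrow> bool" where
  "SDAN A Q \<N> \<longleftrightarrow> is_negotiation A Q \<N> \<and> sound A \<N> \<and> deterministic A \<N> \<and> acyclic_neg \<N>"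

definition merge_applicable :: "('a, 'q, 'n, 'r) negotiation \<Rightarrow> bool" where
  "merge_applicable \<N> \<longleftrightarrow>
     (\<exists>n\<in>atoms \<N>. \<exists>r1\<in>outcomes \<N> n. \<exists>r2\<in>outcomes \<N> n.
        r1 \<noteq> r2 \<and> (\<forall>a\<in>parties \<N> n. next_of \<N> n a r1 = next_of \<N> n a r2))"

definition uncond_enables :: "('a, 'q, 'n, 'r) negotiation \<Rightarrow> 'n \<Rightarrow> 'r \<Rightarrow> 'n \<Rightarrow> bool" where
  "uncond_enables \<N> n r n' \<longleftrightarrow>
     parties \<N> n' \<subseteq> parties \<N> n \<and> (\<forall>a\<in>parties \<N> n'. next_of \<N> n a r = {n'})"

definition dshortcut_applicable :: "('a, 'q, 'n, 'r) negotiation \<Rightarrow> bool" where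
  "dshortcut_applicable \<N> \<longleftrightarrow>
     (\<exists>n\<in>atoms \<N>. \<exists>n'\<in>atoms \<N>. \<exists>r\<in>outcomes \<N> n.
        n \<noteq> n' \<and> uncond_enables \<N> n r n' \<and> card (outcomes \<N> n') \<le> 1
      \<and> ((\<exists>(n1, a1, r1)\<in>Tset \<N>. n1 \<noteq> n \<and> n' \<in> next_of \<N> n1 a1 r1)
          \<longrightarrow> (\<exists>(n1, a1, r1)\<in>Tset \<N>. n1 \<noteq> n \<and> next_of \<N> n1 a1 r1 = {n'})))"

definition irreducible :: "'a set \<Rightarrow> ('a \<Rightarrow> 'q set) \<Rightarrow> ('a, 'q, 'n, 'r) negotiation \<Rightarrow> bool" where
  "irreducible A Q \<N> \<longleftrightarrow> SDAN A Q \<N> \<and> \<not> merge_applicable \<N> \<and> \<not> dshortcut_applicable \<N>"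

end

theory Submission
  imports Defs
begin

locale sdan =
  fixes A :: "'a set" and Q :: "'a \<Rightarrow> 'q set" and N :: "('a, 'q, 'n, 'r) negotiation"
  assumes sd: "SDAN A Q N"
begin

abbreviation "E \<equiv> graph_edges N"
abbreviation "P \<equiv> parties N"
abbreviation "R \<equiv> outcomes N"
abbreviation "nx \<equiv> next_of N"
abbreviation "V \<equiv> atoms N"
abbreviation "n0 \<equiv> init_atom N"
abbreviation "nf \<equiv> final_atom N"

lemma neg: "is_negotiation A Q N" using sd by (simp add: SDAN_def)
lemma snd: "sound A N" using sd by (simp add: SDAN_def)
lemma det: "deterministic A N" using sd by (simp add: SDAN_def)
lemma acy: "acyclic E" using sd by (simp add: SDAN_def acyclic_neg_def)

lemma finA: "finite A" and Ane: "A \<noteq> {}" and finV: "finite V"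
  and n0V: "n0 \<in> V" and nfV: "nf \<in> V"
  and A_n0: "A \<subseteq> P n0" and A_nf: "A \<subseteq> P nf"
  using neg by (auto simp: is_negotiation_def)

lemma atomI: assumes "n \<in> V"
  shows "P n \<noteq> {}" "P n \<subseteq> A" "finite (R n)" "R n \<noteq> {}"
  using neg assms by (auto simp: is_negotiation_def)

lemma nxV: "n \<in> V \<Longrightarrow> a \<in> P n \<Longrightarrow> r \<in> R n \<Longrightarrow> nx n a r \<subseteq> V"
  using neg by (auto simp: is_negotiation_def Tset_def)

lemma nx_empty: "n \<in> V \<Longrightarrow> a \<in> P n \<Longrightarrow> r \<in> R n \<Longrightarrow> nx n a r = {} \<longleftrightarrow> n = nf"
  using neg by (auto simp: is_negotiation_def Tset_def)

lemma nx_single: assumes "n \<in> V" "a \<in> P n" "r \<in> R n" "n \<noteq> nf"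
  shows "\<exists>n'. nx n a r = {n'}"
proof -
  have "a \<in> A" using atomI(2)[OF assms(1)] assms(2) by blast
  then show ?thesis using det assms
    by (auto simp: deterministic_def deterministic_agent_def Tset_def)
qed

lemma nx_eq: assumes "n \<in> V" "a \<in> P n" "r \<in> R n" "y \<in> nx n a r"
  shows "nx n a r = {y}"
proof -
  have "n \<noteq> nf" using nx_empty[OF assms(1-3)] assms(4) by blast
  then show ?thesis using nx_single[OF assms(1-3)] assms(4) by auto
qed

lemma edgeI: "n \<in> V \<Longrightarrow> a \<in> P n \<Longrightarrow> r \<in> R n \<Longrightarrow> v \<in> nx n a r \<Longrightarrow> (n, v) \<in> E"
  by (auto simp: graph_edges_def Tset_def)

lemma E_V: "(u, v) \<in> E \<Longrightarrow> u \<in> V \<and> v \<in> V"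
  using nxV by (fastforce simp: graph_edges_def Tset_def)

lemma Etr_V: "(u, v) \<in> E\<^sup>+ \<Longrightarrow> v \<in> V"
  by (induction rule: trancl_induct) (auto dest: E_V)

lemma no_loop: "(u, u) \<notin> E\<^sup>+"
  using acy by (simp add: acyclic_def)

lemma step_pair: "step N x (n, r) x' \<longleftrightarrow> n \<in> V \<and> r \<in> R n \<and> enables N x n
     \<and> x' = (\<lambda>a. if a \<in> P n then nx n a r else x a)"
  by (simp add: step_def)

lemma run_append: "run N x (\<sigma> @ \<tau>) z \<longleftrightarrow> (\<exists>y. run N x \<sigma> y \<and> run N y \<tau> z)"
  by (induction \<sigma> arbitrary: x) auto

lemma run_fun: "run N x \<sigma> y \<Longrightarrow> run N x \<sigma> y' \<Longrightarrow> y = y'"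
  by (induction \<sigma> arbitrary: x) (auto simp: step_def split: prod.splits)

lemma reach_step: "reachable A N x \<Longrightarrow> step N x s y \<Longrightarrow> reachable A N y"
  unfolding reachable_def by (metis run.simps run_append)

lemma complete: assumes "reachable A N x" shows "\<exists>\<rho>. run N x \<rho> final_marking"
proof -
  obtain \<sigma> where s: "run N (init_marking A N) \<sigma> x" using assms reachable_def by blast
  from snd s have "large_step A N \<sigma> \<or> (\<exists>\<sigma>'. large_step A N (\<sigma> @ \<sigma>'))"
    unfolding sound_def by blast
  then show ?thesis
  proof
    assume "large_step A N \<sigma>"
    then have "x = final_marking" using s run_fun large_step_def by metis
    then show ?thesis by (intro exI[of _ "[]"]) simp
  next
    assume "\<exists>\<sigma>'. large_step A N (\<sigma> @ \<sigma>')"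
    then obtain \<sigma>' where "run N (init_marking A N) (\<sigma> @ \<sigma>') final_marking"
      by (auto simp: large_step_def)
    then show ?thesis using s run_fun run_append by metis
  qed
qed

definition good :: "('a \<Rightarrow> 'n set) \<Rightarrow> bool" where
  "good x \<longleftrightarrow> (\<forall>a. x a = {} \<or> (\<exists>m\<in>V. x a = {m})) \<and> (\<forall>a. a \<notin> A \<longrightarrow> x a = {})"

lemma good_sing: "good x \<Longrightarrow> m \<in> x a \<Longrightarrow> x a = {m}"
  unfolding good_def by (metis empty_iff singletonD)

lemma good_V: "good x \<Longrightarrow> x a \<subseteq> V"
  unfolding good_def by (metis empty_subsetI insert_subset)

lemma good_init: "good (init_marking A N)"
  using n0V by (auto simp: good_def init_marking_def)

lemma good_step: assumes "good x" "step N x s y" shows "good y"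
proof -
  obtain n r where s: "s = (n, r)" by fastforce
  have st: "n \<in> V" "r \<in> R n" "y = (\<lambda>a. if a \<in> P n then nx n a r else x a)"
    using assms(2) s step_pair by auto
  show ?thesis unfolding good_def
  proof (intro conjI allI impI)
    fix a
    show "y a = {} \<or> (\<exists>m\<in>V. y a = {m})"
    proof (cases "a \<in> P n")
      case True
      then show ?thesis using st nx_single[OF st(1) True st(2)] nxV[OF st(1) True st(2)]
        using nx_empty[OF st(1) True st(2)] by (cases "n = nf") auto
    next
      case False then show ?thesis using st assms(1) by (simp add: good_def)
    qed
  next
    fix a assume "a \<notin> A"
    then show "y a = {}" using st assms(1) atomI(2)[OF st(1)] by (auto simp: good_def)
  qed
qed

lemma good_run: "run N x \<sigma> y \<Longrightarrow> good x \<Longrightarrow> good y"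
  by (induction \<sigma> arbitrary: x) (auto intro: good_step)

lemma good_reach: "reachable A N x \<Longrightarrow> good x"
  unfolding reachable_def using good_run good_init by blast

lemma tok_first: "run N z \<sigma> final_marking \<Longrightarrow> z c = {y} \<Longrightarrow> y \<in> fst ` set \<sigma> \<and> c \<in> P y"
proof (induction \<sigma> arbitrary: z)
  case Nil then show ?case by (auto simp: final_marking_def)
next
  case (Cons s \<sigma>)
  obtain n r where s: "s = (n, r)" by fastforce
  obtain z1 where st: "step N z (n, r) z1" "run N z1 \<sigma> final_marking" using Cons.prems s by auto
  show ?case
  proof (cases "c \<in> P n")
    case True
    then have "n \<in> z c" using st(1) by (auto simp: step_pair enables_def)
    then show ?thesis using Cons.prems s True by auto
  next
    case False
    then have "z1 c = {y}" using st(1) Cons.prems by (auto simp: step_pair)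
    then show ?thesis using Cons.IH st(2) by auto
  qed
qed

lemma moves: "run N z \<sigma> z' \<Longrightarrow> (y, s) \<in> set \<sigma> \<Longrightarrow> d \<in> P y \<Longrightarrow> \<exists>v\<in>z d. (v, y) \<in> E\<^sup>*"
proof (induction \<sigma> arbitrary: z)
  case Nil then show ?case by simp
next
  case (Cons st \<sigma>)
  obtain n r where s: "st = (n, r)" by fastforce
  obtain z1 where stp: "step N z (n, r) z1" "run N z1 \<sigma> z'" using Cons.prems s by auto
  have stp': "n \<in> V" "r \<in> R n" "enables N z n" "z1 = (\<lambda>a. if a \<in> P n then nx n a r else z a)"
    using stp(1) step_pair by auto
  show ?case
  proof (cases "(y, s) = (n, r)")
    case True
    then show ?thesis using stp'(3) Cons.prems by (auto simp: enables_def)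
  next
    case False
    then have "(y, s) \<in> set \<sigma>" using Cons.prems s by auto
    then obtain v where v: "v \<in> z1 d" "(v, y) \<in> E\<^sup>*" using Cons.IH stp(2) Cons.prems by blast
    show ?thesis
    proof (cases "d \<in> P n")
      case True
      then have "(n, v) \<in> E" using v stp' edgeI by auto
      moreover have "n \<in> z d" using True stp'(3) by (auto simp: enables_def)
      ultimately show ?thesis using v(2) by (meson converse_rtrancl_into_rtrancl)
    next
      case False then show ?thesis using v stp' by auto
    qed
  qed
qed

lemma track: "run N x \<sigma> z \<Longrightarrow> y \<in> z c \<Longrightarrow>
   y \<in> x c \<or> (\<exists>w s. (w, s) \<in> set \<sigma> \<and> c \<in> P w \<and> y \<in> nx w c s)"
proof (induction \<sigma> arbitrary: x)
  case Nil then show ?case by simp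
next
  case (Cons st \<sigma>)
  obtain n r where s: "st = (n, r)" by fastforce
  obtain x1 where stp: "step N x (n, r) x1" "run N x1 \<sigma> z" using Cons.prems s by auto
  have x1: "x1 = (\<lambda>a. if a \<in> P n then nx n a r else x a)" using stp(1) step_pair by auto
  from Cons.IH[OF stp(2) Cons.prems(2)] show ?case
  proof
    assume "y \<in> x1 c"
    then show ?thesis using x1 s by (cases "c \<in> P n") auto
  next
    assume "\<exists>w s. (w, s) \<in> set \<sigma> \<and> c \<in> P w \<and> y \<in> nx w c s"
    then show ?thesis by auto
  qed
qed

lemma fired_tok: assumes "run N z \<sigma> final_marking" "(w, s) \<in> set \<sigma>" "c \<in> P w" "nx w c s = {y}"
  shows "y \<in> fst ` set \<sigma>"
proof -
  obtain \<sigma>a \<sigma>b where sp: "\<sigma> = \<sigma>a @ (w, s) # \<sigma>b" using assms(2) split_list by fastforce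
  then obtain za zb where "run N z \<sigma>a za" "step N za (w, s) zb" "run N zb \<sigma>b final_marking"
    using assms(1) run_append by auto
  moreover have "zb c = {y}" using calculation(2) assms(3,4) by (auto simp: step_pair)
  ultimately have "y \<in> fst ` set \<sigma>b" using tok_first by metis
  then show ?thesis using sp by auto
qed

lemma run_valid: "run N z \<sigma> z' \<Longrightarrow> (w, s) \<in> set \<sigma> \<Longrightarrow> w \<in> V \<and> s \<in> R w"
  by (induction \<sigma> arbitrary: z) (auto simp: step_def split: prod.splits)

definition mu :: "('a \<Rightarrow> 'n set) \<Rightarrow> nat" where
  "mu x = card {(a, w). a \<in> A \<and> w \<in> E\<^sup>* `` x a}"

lemma rt_img_V: "S \<subseteq> V \<Longrightarrow> E\<^sup>* `` S \<subseteq> V"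
proof
  fix w assume "S \<subseteq> V" "w \<in> E\<^sup>* `` S"
  then obtain v where "v \<in> S" "(v, w) \<in> E\<^sup>*" by blast
  then show "w \<in> V" using \<open>S \<subseteq> V\<close> Etr_V by (auto simp: rtrancl_eq_or_trancl)
qed

lemma mu_step: assumes "good x" "step N x (m, r) y" shows "mu y < mu x"
proof -
  have st: "m \<in> V" "r \<in> R m" "enables N x m" "y = (\<lambda>a. if a \<in> P m then nx m a r else x a)"
    using assms(2) step_pair by auto
  have gy: "good y" using good_step assms by blast
  let ?Sx = "{(a, w). a \<in> A \<and> w \<in> E\<^sup>* `` x a}"
  let ?Sy = "{(a, w). a \<in> A \<and> w \<in> E\<^sup>* `` y a}"
  have xm: "x a = {m}" if "a \<in> P m" for a
  proof -
    have "m \<in> x a" using st(3) that by (auto simp: enables_def)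
    then show ?thesis using assms(1) good_sing by blast
  qed
  have sub: "?Sy \<subseteq> ?Sx"
  proof
    fix p assume "p \<in> ?Sy"
    then obtain a w where p: "p = (a, w)" "a \<in> A" "w \<in> E\<^sup>* `` y a" by blast
    have "w \<in> E\<^sup>* `` x a"
    proof (cases "a \<in> P m")
      case True
      then obtain v where v: "v \<in> nx m a r" "(v, w) \<in> E\<^sup>*" using p st(4) by auto
      then have "(m, v) \<in> E" using edgeI[OF st(1) True st(2)] by blast
      then have "(m, w) \<in> E\<^sup>*" using v(2) by (meson converse_rtrancl_into_rtrancl)
      then show ?thesis using xm[OF True] by auto
    next
      case False then show ?thesis using p st(4) by auto
    qed
    then show "p \<in> ?Sx" using p by blast
  qed
  obtain a where a: "a \<in> P m" using atomI(1)[OF st(1)] by blast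
  have aA: "a \<in> A" using a atomI(2)[OF st(1)] by blast
  have inx: "(a, m) \<in> ?Sx" using xm[OF a] aA by auto
  have nin: "(a, m) \<notin> ?Sy"
  proof
    assume "(a, m) \<in> ?Sy"
    then obtain v where v: "v \<in> nx m a r" "(v, m) \<in> E\<^sup>*" using a st(4) by auto
    then have "(m, v) \<in> E" using edgeI[OF st(1) a st(2)] by blast
    then have "(m, m) \<in> E\<^sup>+" using v(2) by (meson rtrancl_into_trancl2)
    then show False using no_loop by blast
  qed
  have ps: "?Sy \<subset> ?Sx"
  proof (rule psubsetI[OF sub])
    show "?Sy \<noteq> ?Sx" using inx nin by metis
  qed
  have "?Sx \<subseteq> A \<times> V"
  proof
    fix p assume "p \<in> ?Sx"
    then obtain a w where p: "p = (a, w)" "a \<in> A" "w \<in> E\<^sup>* `` x a" by blast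
    have "x a \<subseteq> V" using assms(1) good_V by blast
    then have "w \<in> V" using rt_img_V p(3) by blast
    then show "p \<in> A \<times> V" using p by blast
  qed
  then have "finite ?Sx" by (rule finite_subset[OF _ finite_cartesian_product[OF finA finV]])
  then show ?thesis unfolding mu_def by (rule psubset_card_mono[OF _ ps])
qed

lemma xstar: assumes "n \<in> V"
  obtains x where "reachable A N x" "enables N x n" "\<forall>w\<in>V. enables N x w \<longrightarrow> w = n"
proof -
  have "\<exists>x. reachable A N x \<and> enables N x n" using snd assms by (auto simp: sound_def)
  then obtain x where x: "reachable A N x \<and> enables N x n"
    "\<forall>y. reachable A N y \<and> enables N y n \<longrightarrow> mu x \<le> mu y"
    using ex_has_least_nat[where P="\<lambda>x. reachable A N x \<and> enables N x n" and m=mu] by blast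
  have "\<forall>w\<in>V. enables N x w \<longrightarrow> w = n"
  proof (intro ballI impI, rule ccontr)
    fix w assume w: "w \<in> V" "enables N x w" "w \<noteq> n"
    obtain r where r: "r \<in> R w" using atomI(4)[OF w(1)] by blast
    define y where "y = (\<lambda>a. if a \<in> P w then nx w a r else x a)"
    have st: "step N x (w, r) y" using w r y_def by (simp add: step_pair)
    have g: "good x" using good_reach x(1) by blast
    have "enables N y n"
    proof (unfold enables_def, intro ballI)
      fix c assume c: "c \<in> P n"
      have "n \<in> x c" using x(1) c by (auto simp: enables_def)
      moreover have "c \<notin> P w"
      proof
        assume "c \<in> P w"
        then have "w \<in> x c" using w(2) by (auto simp: enables_def)
        with \<open>n \<in> x c\<close> g have "w = n" using good_sing by (metis singletonD)
        with w(3) show False by blast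
      qed
      ultimately show "n \<in> y c" by (simp add: y_def)
    qed
    moreover have "reachable A N y" using reach_step x(1) st by blast
    ultimately have "mu x \<le> mu y" using x(2) by blast
    moreover have "mu y < mu x" using mu_step g st by blast
    ultimately show False by simp
  qed
  then show ?thesis using that x(1) by blast
qed

definition Inv :: "('a \<Rightarrow> 'n set) \<Rightarrow> 'n \<Rightarrow> ('a \<Rightarrow> 'n set) \<Rightarrow> bool" where
  "Inv xs n z \<longleftrightarrow> (\<forall>c. z c \<subseteq> E\<^sup>+ `` {n} \<or> (c \<notin> P n \<and> z c = xs c))"

lemma Inv_step: assumes only: "\<forall>w\<in>V. enables N xs w \<longrightarrow> w = n" and nV: "n \<in> V"
  and I: "Inv xs n z" and st: "step N z (w, s) z'"
  shows "(n, w) \<in> E\<^sup>+ \<and> Inv xs n z'"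
proof -
  have st': "w \<in> V" "s \<in> R w" "enables N z w" "z' = (\<lambda>a. if a \<in> P w then nx w a s else z a)"
    using st step_pair by auto
  have nw: "(n, w) \<in> E\<^sup>+"
  proof (cases "\<exists>c\<in>P w. z c \<subseteq> E\<^sup>+ `` {n}")
    case True
    then obtain c where "c \<in> P w" "z c \<subseteq> E\<^sup>+ `` {n}" by blast
    moreover have "w \<in> z c" using calculation(1) st'(3) by (auto simp: enables_def)
    ultimately show ?thesis by blast
  next
    case False
    then have h: "\<forall>c\<in>P w. c \<notin> P n \<and> z c = xs c" using I by (auto simp: Inv_def)
    then have "enables N xs w" using st'(3) by (auto simp: enables_def)
    then have "w = n" using only st'(1) by blast
    then show ?thesis using h atomI(1)[OF nV] by blast
  qed
  have "Inv xs n z'" unfolding Inv_def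
  proof
    fix c
    show "z' c \<subseteq> E\<^sup>+ `` {n} \<or> c \<notin> P n \<and> z' c = xs c"
    proof (cases "c \<in> P w")
      case True
      have "nx w c s \<subseteq> E\<^sup>+ `` {n}"
      proof
        fix v assume "v \<in> nx w c s"
        then have "(w, v) \<in> E" using edgeI[OF st'(1) True st'(2)] by blast
        then show "v \<in> E\<^sup>+ `` {n}" using nw by auto
      qed
      then show ?thesis using True st'(4) by auto
    next
      case False then show ?thesis using I st'(4) by (auto simp: Inv_def)
    qed
  qed
  then show ?thesis using nw by blast
qed

lemma Inv_run: assumes "\<forall>w\<in>V. enables N xs w \<longrightarrow> w = n" "n \<in> V"
  shows "Inv xs n z \<Longrightarrow> run N z \<sigma> z' \<Longrightarrow> (w, s) \<in> set \<sigma> \<Longrightarrow> (n, w) \<in> E\<^sup>+"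
proof (induction \<sigma> arbitrary: z)
  case Nil then show ?case by simp
next
  case (Cons st \<sigma>)
  obtain m r where s: "st = (m, r)" by fastforce
  obtain z1 where stp: "step N z (m, r) z1" "run N z1 \<sigma> z'" using Cons.prems s by auto
  have "(n, m) \<in> E\<^sup>+ \<and> Inv xs n z1" using Inv_step[OF assms Cons.prems(1) stp(1)] .
  then show ?case using Cons.IH stp(2) Cons.prems(3) s by auto
qed

lemma Inv_init: assumes "n \<in> V" "r \<in> R n"
  shows "Inv xs n (\<lambda>a. if a \<in> P n then nx n a r else xs a)"
  unfolding Inv_def
proof
  fix c
  show "(if c \<in> P n then nx n c r else xs c) \<subseteq> E\<^sup>+ `` {n} \<or>
        c \<notin> P n \<and> (if c \<in> P n then nx n c r else xs c) = xs c"
  proof (cases "c \<in> P n")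
    case True
    have "nx n c r \<subseteq> E\<^sup>+ `` {n}" using edgeI assms True by blast
    then show ?thesis using True by simp
  qed simp
qed

lemma core:
  assumes only: "\<forall>w\<in>V. enables N xs w \<longrightarrow> w = n" and nV: "n \<in> V"
    and g: "good xs"
    and one: "\<forall>m. (n, m) \<in> E\<^sup>+ \<longrightarrow> card (R m) \<le> 1"
    and r1: "r1 \<in> R n" and r2: "r2 \<in> R n"
    and x1: "x1 = (\<lambda>a. if a \<in> P n then nx n a r1 else xs a)"
    and x2: "x2 = (\<lambda>a. if a \<in> P n then nx n a r2 else xs a)"
    and \<rho>1: "run N x1 \<rho>1 final_marking" and \<rho>2: "run N x2 \<rho>2 final_marking"
    and t: "t \<in> fst ` set \<rho>1" "t \<notin> fst ` set \<rho>2"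
  shows "\<exists>y. (n, y) \<in> E\<^sup>+ \<and> uncond_enables N n r1 y"
proof -
  have "\<exists>i. i < length \<rho>1 \<and> fst (\<rho>1 ! i) \<notin> fst ` set \<rho>2"
  proof -
    obtain p where p: "p \<in> set \<rho>1" "fst p = t" using t(1) by auto
    then obtain j where "j < length \<rho>1" "\<rho>1 ! j = p" unfolding in_set_conv_nth by blast
    then show ?thesis using p t(2) by auto
  qed
  define i where "i = (LEAST i. i < length \<rho>1 \<and> fst (\<rho>1 ! i) \<notin> fst ` set \<rho>2)"
  have i: "i < length \<rho>1" "fst (\<rho>1 ! i) \<notin> fst ` set \<rho>2"
    using LeastI_ex[OF \<open>\<exists>i. _\<close>] unfolding i_def by blast+
  have before: "fst (\<rho>1 ! j) \<in> fst ` set \<rho>2" if "j < i" for j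
    using not_less_Least[of j "\<lambda>i. i < length \<rho>1 \<and> fst (\<rho>1 ! i) \<notin> fst ` set \<rho>2"] that i(1)
    unfolding i_def[symmetric] by auto
  obtain y s where ys: "\<rho>1 ! i = (y, s)" by fastforce
  define \<alpha> where "\<alpha> = take i \<rho>1"
  have dec: "\<rho>1 = \<alpha> @ (y, s) # drop (Suc i) \<rho>1"
    unfolding \<alpha>_def ys[symmetric] by (rule id_take_nth_drop[OF i(1)])
  have h: "run N x1 (\<alpha> @ (y, s) # drop (Suc i) \<rho>1) final_marking"
    unfolding dec[symmetric] by (rule \<rho>1)
  from h have "\<exists>z. run N x1 \<alpha> z \<and> run N z ((y, s) # drop (Suc i) \<rho>1) final_marking"
    by (simp only: run_append)
  then obtain z where z1: "run N x1 \<alpha> z" and z2: "run N z ((y, s) # drop (Suc i) \<rho>1) final_marking"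
    by (elim exE conjE)
  from z2 have "\<exists>z'. step N z (y, s) z' \<and> run N z' (drop (Suc i) \<rho>1) final_marking"
    by (simp only: run.simps(2))
  then obtain z' where "step N z (y, s) z'" by (elim exE conjE)
  note zz = z1 this
  have alpha2: "w \<in> fst ` set \<rho>2" if "(w, s') \<in> set \<alpha>" for w s'
  proof -
    have "\<exists>j<length \<alpha>. \<alpha> ! j = (w, s')" using that by (simp only: in_set_conv_nth)
    then obtain j where "j < length \<alpha>" "\<alpha> ! j = (w, s')" by (elim exE conjE)
    then have ji: "j < i" and rj: "\<rho>1 ! j = (w, s')" unfolding \<alpha>_def by auto
    have "fst (\<rho>1 ! j) \<in> fst ` set \<rho>2" by (rule before[OF ji])
    then show ?thesis using rj by simp
  qed
  have y2: "y \<notin> fst ` set \<rho>2" using i(2) ys by simp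
  have I1: "Inv xs n x1" using Inv_init[OF nV r1] x1 by simp
  have I2: "Inv xs n x2" using Inv_init[OF nV r2] x2 by simp
  have ysetrho: "(y, s) \<in> set \<rho>1" using nth_mem[OF i(1)] ys by simp
  have ny: "(n, y) \<in> E\<^sup>+" using Inv_run[OF only nV I1 \<rho>1 ysetrho] .
  have key: "c \<in> P n \<and> nx n c r1 = {y}" if c: "c \<in> P y" for c
  proof -
    have yz: "y \<in> z c" using zz(2) c by (auto simp: step_pair enables_def)
    from track[OF zz(1) yz] show ?thesis
    proof
      assume yx1: "y \<in> x1 c"
      show ?thesis
      proof (cases "c \<in> P n")
        case True
        then have "y \<in> nx n c r1" using yx1 x1 by simp
        then show ?thesis using nx_eq[OF nV True r1] True by blast
      next
        case False
        then have "y \<in> xs c" using yx1 x1 by simp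
        then have "xs c = {y}" using g good_sing by blast
        then have "x2 c = {y}" using x2 False by simp
        then have "y \<in> fst ` set \<rho>2" using tok_first[OF \<rho>2] by blast
        then show ?thesis using y2 by blast
      qed
    next
      assume "\<exists>w s'. (w, s') \<in> set \<alpha> \<and> c \<in> P w \<and> y \<in> nx w c s'"
      then obtain w s' where ws: "(w, s') \<in> set \<alpha>" "c \<in> P w" "y \<in> nx w c s'" by blast
      have ws1: "(w, s') \<in> set \<rho>1" using ws(1) unfolding \<alpha>_def by (meson in_set_takeD)
      have wV: "w \<in> V" "s' \<in> R w" using run_valid[OF \<rho>1 ws1] by auto
      have nw: "(n, w) \<in> E\<^sup>+" using Inv_run[OF only nV I1 \<rho>1 ws1] .
      obtain s'' where s'': "(w, s'') \<in> set \<rho>2" using alpha2[OF ws(1)] by auto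
      have "s'' \<in> R w" using run_valid[OF \<rho>2 s''] by auto
      moreover have "card (R w) \<le> 1" using one nw by blast
      ultimately have "s'' = s'" using wV atomI(3)[OF wV(1)] card_le_Suc0_iff_eq
        by (metis One_nat_def)
      moreover have "nx w c s' = {y}" using nx_eq[OF wV(1) ws(2) wV(2) ws(3)] .
      ultimately have "y \<in> fst ` set \<rho>2" using fired_tok[OF \<rho>2 s'' ws(2)] by simp
      then show ?thesis using y2 by blast
    qed
  qed
  have "uncond_enables N n r1 y" unfolding uncond_enables_def using key by blast
  then show ?thesis using ny by blast
qed

lemma SC: assumes "n \<in> V" "y \<in> V" "r \<in> R n" "n \<noteq> y" "uncond_enables N n r y" "card (R y) \<le> 1"
  shows "dshortcut_applicable N"
proof -
  have side: "(\<exists>(n1, a1, r1)\<in>Tset N. n1 \<noteq> n \<and> y \<in> nx n1 a1 r1)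
          \<longrightarrow> (\<exists>(n1, a1, r1)\<in>Tset N. n1 \<noteq> n \<and> nx n1 a1 r1 = {y})"
  proof
    assume "\<exists>(n1, a1, r1)\<in>Tset N. n1 \<noteq> n \<and> y \<in> nx n1 a1 r1"
    then obtain n1 a1 r1 where h: "(n1, a1, r1) \<in> Tset N" "n1 \<noteq> n" "y \<in> nx n1 a1 r1" by blast
    then have "nx n1 a1 r1 = {y}" using nx_eq by (auto simp: Tset_def)
    then show "\<exists>(n1, a1, r1)\<in>Tset N. n1 \<noteq> n \<and> nx n1 a1 r1 = {y}" using h by blast
  qed
  show ?thesis unfolding dshortcut_applicable_def using assms side by blast
qed


lemma single_case: assumes "n0 = nf" shows "card V = 1"
proof -
  let ?x0 = "init_marking A N"
  let ?e = "\<lambda>a::'a. {} :: 'n set"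
  have ind: "z = ?x0 \<or> z = ?e \<Longrightarrow> run N z \<sigma> x \<Longrightarrow> x = ?x0 \<or> x = ?e" for z \<sigma> x
  proof (induction \<sigma> arbitrary: z)
    case Nil then show ?case by simp
  next
    case (Cons s \<sigma>)
    obtain m r where s: "s = (m, r)" by fastforce
    obtain z1 where st: "step N z (m, r) z1" "run N z1 \<sigma> x" using Cons.prems s by auto
    have st': "m \<in> V" "r \<in> R m" "enables N z m" "z1 = (\<lambda>a. if a \<in> P m then nx m a r else z a)"
      using st(1) step_pair by auto
    obtain c where c: "c \<in> P m" using atomI(1)[OF st'(1)] by blast
    have cA: "c \<in> A" using c atomI(2)[OF st'(1)] by blast
    have mz: "m \<in> z c" using st'(3) c by (auto simp: enables_def)
    have zx0: "z = ?x0"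
    proof (rule ccontr)
      assume "z \<noteq> ?x0"
      then have "z = ?e" using Cons.prems(1) by blast
      then show False using mz by simp
    qed
    then have mn0: "m = n0" using mz cA by (simp add: init_marking_def)
    have "z1 = ?e"
    proof
      fix a show "z1 a = {}"
      proof (cases "a \<in> P m")
        case True then show ?thesis using st' nx_empty[OF st'(1) True st'(2)] mn0 assms by simp
      next
        case False
        then have "a \<notin> A" using A_n0 mn0 by blast
        then show ?thesis using st'(4) False zx0 by (simp add: init_marking_def)
      qed
    qed
    then show ?case using Cons.IH st(2) by blast
  qed
  have "V \<subseteq> {n0}"
  proof
    fix w assume w: "w \<in> V"
    then obtain x where x: "reachable A N x" "enables N x w" using snd by (auto simp: sound_def)
    obtain \<sigma> where "run N ?x0 \<sigma> x" using x(1) unfolding reachable_def by blast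
    then have xx: "x = ?x0 \<or> x = ?e" using ind[of ?x0] by blast
    obtain c where c: "c \<in> P w" using atomI(1)[OF w] by blast
    have cA: "c \<in> A" using c atomI(2)[OF w] by blast
    have wx: "w \<in> x c" using x(2) c by (simp add: enables_def)
    show "w \<in> {n0}"
    proof (cases "x = ?x0")
      case True then show ?thesis using wx cA by (simp add: init_marking_def)
    next
      case False then show ?thesis using xx wx by simp
    qed
  qed
  then have "V = {n0}" using n0V by blast
  then show ?thesis by simp
qed

end

locale irr = sdan +
  assumes nm: "\<not> merge_applicable N" and ns: "\<not> dshortcut_applicable N"
begin

lemma nochoice: assumes "n0 \<noteq> nf" "\<forall>m\<in>V. card (R m) \<le> 1" shows False
proof -
  let ?x0 = "init_marking A N"
  obtain r where r: "r \<in> R n0" using atomI(4)[OF n0V] by blast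
  define x1 where "x1 = (\<lambda>a. if a \<in> P n0 then nx n0 a r else ?x0 a)"
  have en: "enables N ?x0 n0"
    using atomI(2)[OF n0V] by (auto simp: enables_def init_marking_def)
  have st: "step N ?x0 (n0, r) x1" using n0V r en x1_def by (simp add: step_pair)
  have "reachable A N ?x0" unfolding reachable_def by (rule exI[of _ "[]"]) simp
  then have "reachable A N x1" using reach_step st by blast
  then obtain \<rho> where \<rho>: "run N x1 \<rho> final_marking" using complete by blast
  obtain a where a: "a \<in> A" using Ane by blast
  have "x1 a \<noteq> {}" using nx_empty[OF n0V _ r] A_n0 a assms(1) x1_def by auto
  then have "\<rho> \<noteq> []" using \<rho> by (auto simp: final_marking_def)
  then obtain y s \<rho>' where "\<rho> = (y, s) # \<rho>'" by (metis list.exhaust prod.exhaust)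
  then obtain x2 where st2: "step N x1 (y, s) x2" using \<rho> by auto
  have yV: "y \<in> V" and eny: "enables N x1 y" using st2 step_pair by auto
  have u: "nx n0 c r = {y}" if c: "c \<in> P y" for c
  proof -
    have cn: "c \<in> P n0" using c atomI(2)[OF yV] A_n0 by blast
    have "y \<in> x1 c" using eny c by (auto simp: enables_def)
    then have "y \<in> nx n0 c r" using cn x1_def by simp
    then show ?thesis using nx_eq[OF n0V cn r] by blast
  qed
  have ue: "uncond_enables N n0 r y" unfolding uncond_enables_def
    using u atomI(2)[OF yV] A_n0 by blast
  obtain c where c: "c \<in> P y" using atomI(1)[OF yV] by blast
  have "(n0, y) \<in> E" using edgeI[OF n0V _ r] u[OF c] c atomI(2)[OF yV] A_n0 by blast
  then have "n0 \<noteq> y" using no_loop by blast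
  then have "dshortcut_applicable N" using SC[OF n0V yV r _ ue] assms(2) yV by blast
  then show False using ns by blast
qed

lemma choice: assumes "n0 \<noteq> nf" "\<exists>m\<in>V. \<not> card (R m) \<le> 1" shows False
proof -
  let ?C = "{m\<in>V. \<not> card (R m) \<le> 1}"
  obtain m0 where "m0 \<in> ?C" using assms(2) by blast
  then obtain n where n: "n \<in> ?C" "\<forall>m. m \<in> ?C \<longrightarrow> card (E\<^sup>+ `` {n}) \<le> card (E\<^sup>+ `` {m})"
    using ex_has_least_nat[where P="\<lambda>m. m \<in> ?C" and m="\<lambda>m. card (E\<^sup>+ `` {m})"] by blast
  have nV: "n \<in> V" using n(1) by blast
  have fin: "finite (E\<^sup>+ `` {m})" for m using Etr_V finV by (meson Image_singleton_iff finite_subset subsetI)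
  have one: "\<forall>m. (n, m) \<in> E\<^sup>+ \<longrightarrow> card (R m) \<le> 1"
  proof (intro allI impI, rule ccontr)
    fix m assume m: "(n, m) \<in> E\<^sup>+" "\<not> card (R m) \<le> 1"
    then have "m \<in> ?C" using Etr_V by blast
    have "E\<^sup>+ `` {m} \<subset> E\<^sup>+ `` {n}"
    proof (rule psubsetI)
      show "E\<^sup>+ `` {m} \<subseteq> E\<^sup>+ `` {n}" using m(1) by (auto intro: trancl_trans)
      show "E\<^sup>+ `` {m} \<noteq> E\<^sup>+ `` {n}" using m(1) no_loop by blast
    qed
    then have "card (E\<^sup>+ `` {m}) < card (E\<^sup>+ `` {n})" using fin psubset_card_mono by blast
    then show False using n(2) \<open>m \<in> ?C\<close> by force
  qed
  obtain xs where xs: "reachable A N xs" "enables N xs n" "\<forall>w\<in>V. enables N xs w \<longrightarrow> w = n"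
    using xstar[OF nV] by blast
  have g: "good xs" using good_reach xs(1) by blast
  have "\<not> (\<forall>a\<in>R n. \<forall>b\<in>R n. a = b)"
    using n(1) atomI(3)[OF nV] card_le_Suc0_iff_eq by (metis (no_types, lifting) One_nat_def mem_Collect_eq)
  then obtain r1 r2 where rr: "r1 \<in> R n" "r2 \<in> R n" "r1 \<noteq> r2" by blast
  then obtain d where d: "d \<in> P n" "nx n d r1 \<noteq> nx n d r2"
    using nm nV unfolding merge_applicable_def by blast
  have nnf: "n \<noteq> nf" using d nx_empty[OF nV d(1) rr(1)] nx_empty[OF nV d(1) rr(2)] by blast
  obtain t1 where t1: "nx n d r1 = {t1}" using nx_single[OF nV d(1) rr(1) nnf] by blast
  obtain t2 where t2: "nx n d r2 = {t2}" using nx_single[OF nV d(1) rr(2) nnf] by blast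
  have t12: "t1 \<noteq> t2" using d(2) t1 t2 by blast
  define x1 where "x1 = (\<lambda>a. if a \<in> P n then nx n a r1 else xs a)"
  define x2 where "x2 = (\<lambda>a. if a \<in> P n then nx n a r2 else xs a)"
  have "step N xs (n, r1) x1" using nV rr(1) xs(2) x1_def by (simp add: step_pair)
  then obtain \<rho>1 where \<rho>1: "run N x1 \<rho>1 final_marking" using reach_step xs(1) complete by blast
  have "step N xs (n, r2) x2" using nV rr(2) xs(2) x2_def by (simp add: step_pair)
  then obtain \<rho>2 where \<rho>2: "run N x2 \<rho>2 final_marking" using reach_step xs(1) complete by blast
  have x1d: "x1 d = {t1}" using x1_def d(1) t1 by simp
  have x2d: "x2 d = {t2}" using x2_def d(1) t2 by simp
  have f1: "t1 \<in> fst ` set \<rho>1" "d \<in> P t1" using tok_first[OF \<rho>1 x1d] by auto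
  have f2: "t2 \<in> fst ` set \<rho>2" "d \<in> P t2" using tok_first[OF \<rho>2 x2d] by auto
  have cases: "t1 \<notin> fst ` set \<rho>2 \<or> t2 \<notin> fst ` set \<rho>1"
  proof (rule ccontr)
    assume "\<not> ?thesis"
    then have a1: "t1 \<in> fst ` set \<rho>2" and a2: "t2 \<in> fst ` set \<rho>1" by auto
    obtain s1 where "(t1, s1) \<in> set \<rho>2" using a1 by auto
    then have "(t2, t1) \<in> E\<^sup>*" using moves[OF \<rho>2 _ f1(2)] x2d by fastforce
    then have e1: "(t2, t1) \<in> E\<^sup>+" using t12 rtranclD by metis
    obtain s2 where "(t2, s2) \<in> set \<rho>1" using a2 by auto
    then have "(t1, t2) \<in> E\<^sup>*" using moves[OF \<rho>1 _ f2(2)] x1d by fastforce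
    then have e2: "(t1, t2) \<in> E\<^sup>+" using t12 rtranclD by metis
    show False using trancl_trans[OF e1 e2] no_loop by blast
  qed
  have "\<exists>y r. r \<in> R n \<and> (n, y) \<in> E\<^sup>+ \<and> uncond_enables N n r y"
  proof (cases "t1 \<notin> fst ` set \<rho>2")
    case True
    then show ?thesis using core[OF xs(3) nV g one rr(1) rr(2) x1_def x2_def \<rho>1 \<rho>2 f1(1)] rr by blast
  next
    case False
    then have "t2 \<notin> fst ` set \<rho>1" using cases by blast
    then show ?thesis using core[OF xs(3) nV g one rr(2) rr(1) x2_def x1_def \<rho>2 \<rho>1 f2(1)] rr by blast
  qed
  then obtain y r where y: "r \<in> R n" "(n, y) \<in> E\<^sup>+" "uncond_enables N n r y" by blast
  have "n \<noteq> y" using y(2) no_loop by blast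
  moreover have "y \<in> V" using y(2) Etr_V by blast
  ultimately have "dshortcut_applicable N" using SC[OF nV _ y(1) _ y(3)] one y(2) by blast
  then show False using ns by blast
qed

lemma main: "card V = 1"
proof (cases "n0 = nf")
  case True then show ?thesis using single_case by blast
next
  case False
  then show ?thesis using nochoice choice by blast
qed

end

theorem theorem5:
  fixes A :: "'a set" and Q :: "'a \<Rightarrow> 'q set" and \<N> :: "('a, 'q, 'n, 'r) negotiation"
  assumes "SDAN A Q \<N>" and "irreducible A Q \<N>"
  shows "card (atoms \<N>) = 1"
proof -
  interpret irr A Q \<N>
    using assms by unfold_locales (auto simp: irreducible_def)
  show ?thesis by (rule main)
qed

end
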